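(* If $f,g\in\operatorname{Aut}_{adm}\mathcal M$, then for all $a,b\in\mathbb Z(p)$ with $a\le b<ap^{N_0}$, $$\alpha_{ab0}(fg)=\sum_{c\in\mathbb Z(p)}\alpha_{ac0}(f)\alpha_{cb0}(g),$$ where $fg$ denotes the composition "first $f$, then $g$", i.e. $(fg)(x)=g(f(x))$.
   Context: Let $p$ be a prime, $N_0\in\mathbb N$, $k=\mathbb F_{p^{N_0}}$, $K=k((t))$, $\sigma$ Frobenius, $\mathbb Z(p)=\{a\in\mathbb N:p\nmid a\}$. Let $\mathcal M=I(p)^{ab}\otimes\mathbb F_p$, where $I(p)^{ab}$ is the image of the inertia subgroup in the abelianization of the Galois group of the maximal $p$-extension of $K$, and $\mathcal M_k=\mathcal M\otimes_{\mathbb F_p}k$. There is a standard set of free topological generators $\{D_{an}: a\in\mathbb Z(p), n\in\mathbb Z/N_0\mathbb Z\}$ of the $k$-module $\mathcal M_k$ with $(\sigma\otimes\cdot)$-compatibility $D_{an}=(\mathrm{id}\otimes\sigma^n)D_{a0}$ (namely $D_{an}=\sum_r\sigma^n(\alpha_r)\otimes D_a^{(r)}$ for a $\mathbb Z_p$-basis dual pair; concretely, for any $\mathbb F_p$-linear $f$ extended $k$-linearly, $f(D_{a0})=\sum\alpha_{abn}D_{bn}$ implies $f(D_{am})=\sum\sigma^m(\alpha_{abn})D_{b,n+m}$). For a continuous $\mathbb F_p$-linear automorphism $f$ of $\mathcal M$, extended $k$-linearly to $\mathcal M_k$, define $\alpha_{abn}(f)\in k$ by $f(D_{a0})=\sum_{b\in\mathbb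 Z(p),n\in\mathbb Z/N_0}\alpha_{abn}(f)D_{bn}$, with $\alpha_{abn}(f)=0$ if $p\mid a$ or $p\mid b$. $\operatorname{Aut}_{adm}\mathcal M$ is the set of continuous $\mathbb F_p$-linear automorphisms $f$ of $\mathcal M$ such that $\alpha_{a,b,m\bmod N_0}(f)=0$ whenever $a,b\in\mathbb Z(p)$, $-N_0<m\le0$ and $bp^m<a$. *)

theory Defs
  imports Main "HOL-Library.Groups_Big_Fun" "HOL-Computational_Algebra.Primes"
begin

text \<open>Concrete model of M_k = M \<otimes> k.  An element is the coefficient family
  x (b,n) of the (topological) generators D_{bn}, b in Z(p), n in Z/N0 (represented by
  0..<N0).  Coefficients at invalid indices are normalised to 0.  Since the D_{bn} are free
  topological generators, every coefficient family is an element (product topology).\<close>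

definition Mk :: "nat \<Rightarrow> nat \<Rightarrow> (nat \<times> nat \<Rightarrow> 'k::zero) set" where
  "Mk p N0 = {x. \<forall>b n. (p dvd b \<or> N0 \<le> n) \<longrightarrow> x (b, n) = 0}"

definition gen :: "nat \<Rightarrow> nat \<Rightarrow> nat \<Rightarrow> nat \<Rightarrow> (nat \<times> nat \<Rightarrow> 'k::{zero,one})" where
  "gen p N0 a n = (\<lambda>(b, m). if b = a \<and> m = n \<and> \<not> p dvd a \<and> n < N0 then 1 else 0)"

definition frob :: "nat \<Rightarrow> 'k::field \<Rightarrow> 'k" where
  "frob p x = x ^ p"

text \<open>The semilinear operator id \<otimes> sigma on M_k:
  it sends sum x_{bn} D_{bn} to sum sigma(x_{bn}) D_{b,n+1}.\<close>
definition Phi :: "nat \<Rightarrow> nat \<Rightarrow> (nat \<times> nat \<Rightarrow> 'k::field) \<Rightarrow> (nat \<times> nat \<Rightarrow> 'k)" where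
  "Phi p N0 x = (\<lambda>(b, n). if n < N0 then frob p (x (b, (n + N0 - 1) mod N0)) else 0)"

definition klinear :: "nat \<Rightarrow> nat \<Rightarrow> ((nat \<times> nat \<Rightarrow> 'k::field) \<Rightarrow> (nat \<times> nat \<Rightarrow> 'k)) \<Rightarrow> bool" where
  "klinear p N0 F \<longleftrightarrow>
     (\<forall>x\<in>Mk p N0. \<forall>y\<in>Mk p N0. F (\<lambda>i. x i + y i) = (\<lambda>i. F x i + F y i)) \<and>
     (\<forall>c. \<forall>x\<in>Mk p N0. F (\<lambda>i. c * x i) = (\<lambda>i. c * F x i))"

text \<open>Continuity for the product topology (k discrete): each coordinate of F x depends
  only on finitely many coordinates of x.\<close>
definition kcont :: "nat \<Rightarrow> nat \<Rightarrow> ((nat \<times> nat \<Rightarrow> 'k::field) \<Rightarrow> (nat \<times> nat \<Rightarrow> 'k)) \<Rightarrow> bool" where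
  "kcont p N0 F \<longleftrightarrow>
     (\<forall>j. \<exists>S. finite S \<and>
        (\<forall>x\<in>Mk p N0. \<forall>y\<in>Mk p N0. (\<forall>i\<in>S. x i = y i) \<longrightarrow> F x j = F y j))"

text \<open>k-linear extensions of continuous F_p-linear automorphisms of M: continuous
  k-linear bijections of M_k commuting with id \<otimes> sigma (Galois descent).\<close>
definition ext_aut :: "nat \<Rightarrow> nat \<Rightarrow> ((nat \<times> nat \<Rightarrow> 'k::field) \<Rightarrow> (nat \<times> nat \<Rightarrow> 'k)) \<Rightarrow> bool" where
  "ext_aut p N0 F \<longleftrightarrow>
     bij_betw F (Mk p N0) (Mk p N0) \<and> klinear p N0 F \<and> kcont p N0 F \<and>
     (\<forall>x\<in>Mk p N0. F (Phi p N0 x) = Phi p N0 (F x))"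

definition alpha :: "nat \<Rightarrow> nat \<Rightarrow> ((nat \<times> nat \<Rightarrow> 'k::field) \<Rightarrow> (nat \<times> nat \<Rightarrow> 'k))
     \<Rightarrow> nat \<Rightarrow> nat \<Rightarrow> nat \<Rightarrow> 'k" where
  "alpha p N0 F a b n = (if p dvd a \<or> p dvd b then 0 else F (gen p N0 a 0) (b, n))"

text \<open>Admissibility: alpha_{a,b,m mod N0} = 0 for -N0 < m \<le> 0 and b p^m < a.
  Writing m = -j with 0 \<le> j < N0: the index is (N0 - j) mod N0 and the condition is b < a p^j.\<close>
definition Aut_adm :: "nat \<Rightarrow> nat \<Rightarrow> ((nat \<times> nat \<Rightarrow> 'k::field) \<Rightarrow> (nat \<times> nat \<Rightarrow> 'k)) set" where
  "Aut_adm p N0 = {F. ext_aut p N0 F \<and>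
     (\<forall>a b j. \<not> p dvd a \<and> \<not> p dvd b \<and> j < N0 \<and> b < a * p ^ j \<longrightarrow>
        alpha p N0 F a b ((N0 - j) mod N0) = 0)}"

end

theory Submission
  imports Defs
begin

lemma Mk_add: "x \<in> Mk p N0 \<Longrightarrow> y \<in> Mk p N0 \<Longrightarrow> (\<lambda>i. x i + y i :: 'k::comm_monoid_add) \<in> Mk p N0"
  by (auto simp: Mk_def)
lemma Mk_smult: "x \<in> Mk p N0 \<Longrightarrow> (\<lambda>i. c * x i :: 'k::mult_zero) \<in> Mk p N0"
  by (auto simp: Mk_def)
lemma Mk_zero: "(\<lambda>i. 0) \<in> Mk p N0"
  by (auto simp: Mk_def)
lemma gen_Mk: "gen p N0 a n \<in> Mk p N0"
  by (auto simp: Mk_def gen_def)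

lemma Phi_Mk:
  assumes "p > 0" "x \<in> Mk p N0"
  shows "Phi p N0 (x :: nat \<times> nat \<Rightarrow> 'k::field) \<in> Mk p N0"
  using assms by (auto simp: Mk_def Phi_def frob_def)

lemma Phi_pow_Mk:
  assumes "p > 0" "x \<in> Mk p N0"
  shows "(Phi p N0 ^^ n) (x :: nat \<times> nat \<Rightarrow> 'k::field) \<in> Mk p N0"
  by (induction n) (auto simp: assms Phi_Mk)

lemma frob_pow_0: "p > 0 \<Longrightarrow> (frob p ^^ n) (0::'k::field) = 0"
  by (induction n) (auto simp: frob_def)
lemma frob_pow_1: "(frob p ^^ n) (1::'k::field) = 1"
  by (induction n) (auto simp: frob_def)

lemma Phi_pow_formula:
  assumes "N0 > 0" "m < N0"
  shows "(Phi p N0 ^^ n) (w :: nat \<times> nat \<Rightarrow> 'k::field) (b, m) =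
    (frob p ^^ n) (w (b, nat ((int m - int n) mod int N0)))"
  using assms(2)
proof (induction n arbitrary: m)
  case 0
  then show ?case by simp
next
  case (Suc n)
  define m' where "m' = (m + N0 - 1) mod N0"
  have m': "m' < N0" using assms(1) by (simp add: m'_def)
  have "int m' = (int m - 1) mod int N0"
  proof -
    have "int m' = int (m + N0 - 1) mod int N0" by (simp add: m'_def zmod_int)
    also have "int (m + N0 - 1) = (int m - 1) + int N0" using assms(1) by simp
    also have "((int m - 1) + int N0) mod int N0 = (int m - 1) mod int N0" by simp
    finally show ?thesis .
  qed
  hence e: "(int ((m + N0 - 1) mod N0) - int n) mod int N0 = (int m - int (Suc n)) mod int N0"
    unfolding m'_def by (simp add: mod_diff_left_eq algebra_simps)
  have "(Phi p N0 ^^ Suc n) w (b, m) = frob p ((Phi p N0 ^^ n) w (b, m'))"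
    using Suc.prems by (simp add: Phi_def m'_def)
  also have "\<dots> = frob p ((frob p ^^ n) (w (b, nat ((int m' - int n) mod int N0))))"
    using Suc.IH[OF m'] by simp
  also have "\<dots> = (frob p ^^ Suc n) (w (b, nat ((int m - int (Suc n)) mod int N0)))"
    using e by (simp add: m'_def del: of_nat_Suc)
  finally show ?case .
qed

lemma idx_mod:
  assumes "m < N0" "n < N0"
  shows "nat ((int m - int n) mod int N0) = (if n \<le> m then m - n else m + N0 - n)"
proof (cases "n \<le> m")
  case True
  hence "(int m - int n) mod int N0 = int m - int n"
    using assms by (intro mod_pos_pos_trivial) auto
  then show ?thesis using True by simp
next
  case False
  have "(int m - int n) mod int N0 = (int m - int n + int N0) mod int N0" by simp
  also have "\<dots> = int m - int n + int N0"
    using assms False by (intro mod_pos_pos_trivial) auto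
  finally show ?thesis using False by simp
qed

lemma gen_out: "N0 \<le> m \<Longrightarrow> gen p N0 c n (b,m) = (0::'k::zero_neq_one)"
  by (simp add: gen_def)

lemma Phi_pow_out: "\<not> m < N0 \<Longrightarrow> n > 0 \<Longrightarrow> (Phi p N0 ^^ n) (w :: nat \<times> nat \<Rightarrow> 'k::field) (b, m) = 0"
  by (cases n) (auto simp: Phi_def)

lemma gen_Phi:
  assumes "N0 > 0" "p > 0" "n < N0"
  shows "gen p N0 c n = (Phi p N0 ^^ n) (gen p N0 c 0 :: nat \<times> nat \<Rightarrow> 'a::field)"
proof
  fix j :: "nat \<times> nat"
  obtain b m where j: "j = (b, m)" by (cases j)
  show "gen p N0 c n j = (Phi p N0 ^^ n) (gen p N0 c 0) j"
  proof (cases "m < N0")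
    case True
    have eq: "nat ((int m - int n) mod int N0) = 0 \<longleftrightarrow> m = n"
      using idx_mod[OF True assms(3)] True assms(3) by auto
    show ?thesis using True assms
      by (auto simp: j Phi_pow_formula gen_def idx_mod[OF True assms(3)] frob_pow_0 frob_pow_1)
  next
    case False
    hence "m \<noteq> 0" using assms by auto
    have nz: "n > 0 \<Longrightarrow> (Phi p N0 ^^ n) (gen p N0 c 0) (b, m) = 0"
      using False by (rule Phi_pow_out)
    show ?thesis
    proof (cases "n = 0")
      case True then show ?thesis using False by (simp add: j gen_def)
    next
      case False2: False
      show ?thesis unfolding j using nz False2 False by (simp add: gen_out)
    qed
  qed
qed

lemma klinear_zero:
  assumes "klinear p N0 F"
  shows "F (\<lambda>i. 0) = (\<lambda>i. 0 :: 'k::field)"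
proof -
  have h: "\<forall>c. \<forall>x\<in>Mk p N0. F (\<lambda>i. c * x i) = (\<lambda>i. c * F x i)"
    using assms unfolding klinear_def by blast
  have "F (\<lambda>i. 0 * (\<lambda>i. 0::'k) i) = (\<lambda>i. 0 * F (\<lambda>i. 0) i)"
    by (rule h[rule_format, of "\<lambda>i. 0" 0, OF Mk_zero])
  thus ?thesis by simp
qed

lemma klinear_sum:
  assumes "klinear p N0 F" "finite T" "\<And>i. i \<in> T \<Longrightarrow> z i \<in> Mk p N0"
  shows "F (\<lambda>j. \<Sum>i\<in>T. c i * z i j) = (\<lambda>j. \<Sum>i\<in>T. c i * F (z i) j :: 'k::field)"
  using assms(2,3)
proof (induction T rule: finite_induct)
  case empty
  then show ?case using klinear_zero[OF assms(1)] by simp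
next
  case (insert x T)
  have S: "(\<lambda>j. \<Sum>i\<in>T. c i * z i j) \<in> Mk p N0"
    using insert by (auto simp: Mk_def)
  have Z: "(\<lambda>j. c x * z x j) \<in> Mk p N0" by (rule Mk_smult) (use insert in auto)
  have "F (\<lambda>j. \<Sum>i\<in>insert x T. c i * z i j) = F (\<lambda>j. c x * z x j + (\<Sum>i\<in>T. c i * z i j))"
    using insert by simp
  also have "\<dots> = (\<lambda>j. F (\<lambda>j. c x * z x j) j + F (\<lambda>j. \<Sum>i\<in>T. c i * z i j) j)"
  proof -
    have l1: "\<forall>x\<in>Mk p N0. \<forall>y\<in>Mk p N0. F (\<lambda>i. x i + y i) = (\<lambda>i. F x i + F y i)"
      using assms(1) unfolding klinear_def by blast
    show ?thesis by (rule l1[rule_format, OF Z S])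
  qed
  also have "F (\<lambda>j. c x * z x j) = (\<lambda>j. c x * F (z x) j)"
    using assms(1) insert unfolding klinear_def by blast
  finally show ?case using insert by simp
qed

theorem proposition2p2:
  fixes p N0 a b :: nat
    and f g :: "(nat \<times> nat \<Rightarrow> 'k::{finite,field}) \<Rightarrow> (nat \<times> nat \<Rightarrow> 'k)"
  assumes "prime p"
    and "card (UNIV :: 'k set) = p ^ N0"
    and "f \<in> Aut_adm p N0"
    and "g \<in> Aut_adm p N0"
    and "\<not> p dvd a" and "\<not> p dvd b"
    and "a \<le> b" and "b < a * p ^ N0"
  shows "alpha p N0 (g \<circ> f) a b 0 =
    Sum_any (\<lambda>c. if p dvd c then 0 else alpha p N0 f a c 0 * alpha p N0 g c b 0)"
proof -
  have p0: "p > 0" using assms(1) prime_gt_0_nat by blast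
  have N0: "N0 > 0"
  proof (rule ccontr)
    assume "\<not> N0 > 0"
    hence "card (UNIV :: 'k set) = 1" using assms(2) by simp
    then obtain e where "UNIV = {e::'k}" using card_1_singletonE by blast
    hence "(0::'k) = 1" by (metis UNIV_I singletonD)
    thus False by simp
  qed
  have fA: "ext_aut p N0 f" and gA: "ext_aut p N0 g" using assms(3,4) by (auto simp: Aut_adm_def)
  have fadm: "\<And>a b j. \<not> p dvd a \<Longrightarrow> \<not> p dvd b \<Longrightarrow> j < N0 \<Longrightarrow> b < a * p ^ j \<Longrightarrow>
        alpha p N0 f a b ((N0 - j) mod N0) = 0" using assms(3) by (auto simp: Aut_adm_def)
  have gadm: "\<And>a b j. \<not> p dvd a \<Longrightarrow> \<not> p dvd b \<Longrightarrow> j < N0 \<Longrightarrow> b < a * p ^ j \<Longrightarrow>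
        alpha p N0 g a b ((N0 - j) mod N0) = 0" using assms(4) by (auto simp: Aut_adm_def)
  have gMk: "\<And>x. x \<in> Mk p N0 \<Longrightarrow> g x \<in> Mk p N0" and fMk: "\<And>x. x \<in> Mk p N0 \<Longrightarrow> f x \<in> Mk p N0"
    using fA gA by (auto simp: ext_aut_def bij_betw_def)
  have glin: "klinear p N0 g" using gA by (simp add: ext_aut_def)
  have gPhi: "\<And>x. x \<in> Mk p N0 \<Longrightarrow> g (Phi p N0 x) = Phi p N0 (g x)" using gA by (simp add: ext_aut_def)
  have gPhin: "g ((Phi p N0 ^^ n) x) = (Phi p N0 ^^ n) (g x)" if "x \<in> Mk p N0" for n x
  proof (induction n)
    case (Suc n)
    have "g ((Phi p N0 ^^ Suc n) x) = g (Phi p N0 ((Phi p N0 ^^ n) x))" by simp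
    also have "\<dots> = Phi p N0 (g ((Phi p N0 ^^ n) x))" using gPhi[OF Phi_pow_Mk[OF p0 that]] by simp
    finally show ?case using Suc by simp
  qed simp
  define x where "x = f (gen p N0 a 0)"
  have xMk: "x \<in> Mk p N0" unfolding x_def by (rule fMk[OF gen_Mk])
  have gk: "kcont p N0 g" using gA by (simp add: ext_aut_def)
  have "\<exists>S. finite S \<and> (\<forall>u\<in>Mk p N0. \<forall>v\<in>Mk p N0. (\<forall>i\<in>S. u i = v i) \<longrightarrow> g u (b, 0) = g v (b, 0))"
    using gk unfolding kcont_def by (rule spec)
  then obtain S where S1: "finite S" and S2: "\<forall>u\<in>Mk p N0. \<forall>v\<in>Mk p N0. (\<forall>i\<in>S. u i = v i) \<longrightarrow> g u (b, 0) = g v (b, 0)"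
    by blast
  note S = S1 S2[rule_format]
  define T where "T = S \<union> ({..b} \<times> {..<N0})"
  have T: "finite T" using S(1) by (simp add: T_def)
  define y where "y = (\<lambda>j. \<Sum>i\<in>T. x i * gen p N0 (fst i) (snd i) j)"
  have y_eq: "y j = (if j \<in> T then x j else 0)" for j
  proof -
    have "y j = (\<Sum>i\<in>T. if i = j then (if \<not> p dvd fst j \<and> snd j < N0 then x j else 0) else 0)"
      unfolding y_def
    proof (rule sum.cong[OF refl])
      fix i assume "i \<in> T"
      obtain c n where i: "i = (c, n)" by (cases i)
      obtain b' m where j: "j = (b', m)" by (cases j)
      show "x i * gen p N0 (fst i) (snd i) j = (if i = j then (if \<not> p dvd fst j \<and> snd j < N0 then x j else 0) else 0)"
        by (simp add: i j gen_def)
    qed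
    also have "\<dots> = (if j \<in> T then x j else 0)"
      using xMk T by (cases j) (auto simp: Mk_def sum.delta sum.delta')
    finally show ?thesis .
  qed
  have yMk: "y \<in> Mk p N0" using xMk by (auto simp: Mk_def y_eq)
  have agree: "\<And>i. i \<in> S \<Longrightarrow> x i = y i" by (simp add: y_eq T_def)
  have "g x (b, 0) = g y (b, 0)" by (rule S(2)[OF xMk yMk agree])
  also have "g y = (\<lambda>j. \<Sum>i\<in>T. x i * g (gen p N0 (fst i) (snd i)) j)"
    unfolding y_def by (rule klinear_sum[OF glin T]) (rule gen_Mk)
  finally have main: "g x (b, 0) = (\<Sum>i\<in>T. x i * g (gen p N0 (fst i) (snd i)) (b, 0))" .
  define H where "H c = alpha p N0 f a c 0 * alpha p N0 g c b 0" for c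
  define h where "h i = (if snd i = 0 \<and> \<not> p dvd fst i then H (fst i) else 0)" for i :: "nat \<times> nat"
  have tm: "x i * g (gen p N0 (fst i) (snd i)) (b, 0) = h i" for i
  proof -
    obtain c n where i: "i = (c, n)" by (cases i)
    show ?thesis
    proof (cases "p dvd c \<or> n \<ge> N0")
      case True
      hence "x i = 0" using xMk by (auto simp: Mk_def i)
      moreover have "h i = 0" using True N0 by (auto simp: h_def i)
      ultimately show ?thesis by simp
    next
      case False
      hence pc: "\<not> p dvd c" and nN: "n < N0" by auto
      show ?thesis
      proof (cases "n = 0")
        case True
        then show ?thesis using pc assms(5,6)
          by (simp add: h_def H_def i alpha_def x_def)
      next
        case False
        hence hi: "h i = 0" by (simp add: h_def i)
        show ?thesis
        proof (cases "c < a * p ^ (N0 - n)")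
          case True
          have "alpha p N0 f a c ((N0 - (N0 - n)) mod N0) = 0"
            by (rule fadm) (use assms(5) pc True nN False in auto)
          hence "x i = 0" using nN pc assms(5) by (simp add: alpha_def x_def i)
          then show ?thesis using hi by simp
        next
          case False2: False
          have "a * p ^ N0 = a * p ^ (N0 - n) * p ^ n"
            using nN by (simp add: power_add[symmetric])
          also have "\<dots> \<le> c * p ^ n" using False2 by simp
          finally have bc: "b < c * p ^ n" using assms(8) by simp
          have "alpha p N0 g c b ((N0 - n) mod N0) = 0"
            by (rule gadm) (use assms(6) pc bc nN in auto)
          hence z: "g (gen p N0 c 0) (b, N0 - n) = 0"
            using pc assms(6) False nN by (simp add: alpha_def)
          have idx: "nat ((int 0 - int n) mod int N0) = N0 - n"
          proof -
            have "(- int n) mod int N0 = int N0 - int n"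
              using nN False by (simp add: zmod_zminus1_eq_if mod_pos_pos_trivial)
            thus ?thesis using nN by simp
          qed
          have "g (gen p N0 c n) (b, 0) = (Phi p N0 ^^ n) (g (gen p N0 c 0)) (b, 0)"
            by (simp only: gen_Phi[OF N0 p0 nN, of c] gPhin[OF gen_Mk])
          also have "\<dots> = 0"
            using Phi_pow_formula[where m=0 and n=n and w="g (gen p N0 c 0)" and b=b and p=p, OF N0] N0 idx z frob_pow_0[OF p0]
            by simp
          finally show ?thesis using hi by (simp add: i)
        qed
      qed
    qed
  qed
  have "alpha p N0 (g \<circ> f) a b 0 = g x (b, 0)"
    using assms(5,6) by (simp add: alpha_def x_def)
  also have "\<dots> = (\<Sum>i\<in>T. h i)" by (simp only: main tm)
  also have "\<dots> = (\<Sum>i\<in>(\<lambda>c. (c, 0)) ` {..b}. h i)"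
  proof (rule sum.mono_neutral_right[OF T])
    show "(\<lambda>c. (c, 0)) ` {..b} \<subseteq> T" using N0 by (auto simp: T_def)
    show "\<forall>i\<in>T - (\<lambda>c. (c, 0)) ` {..b}. h i = 0"
    proof
      fix i assume "i \<in> T - (\<lambda>c. (c, 0)) ` {..b}"
      then show "h i = 0"
      proof (cases "snd i = 0 \<and> \<not> p dvd fst i")
        case True
        with \<open>i \<in> _\<close> have "fst i > b" by (cases i) auto
        hence "alpha p N0 g (fst i) b ((N0 - 0) mod N0) = 0"
          using gadm[of "fst i" b 0] True assms(6) N0 by simp
        thus ?thesis using True by (simp add: h_def H_def)
      qed (auto simp: h_def)
    qed
  qed
  also have "\<dots> = (\<Sum>c\<in>{..b}. h (c, 0))"
    by (subst sum.reindex) (auto simp: inj_on_def)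
  also have "\<dots> = Sum_any (\<lambda>c. if p dvd c then 0 else H c)"
  proof -
    have sub: "{c. (if p dvd c then 0 else H c) \<noteq> 0} \<subseteq> {..b}"
    proof
      fix c assume c: "c \<in> {c. (if p dvd c then 0 else H c) \<noteq> 0}"
      show "c \<in> {..b}"
      proof (rule ccontr)
        assume "c \<notin> {..b}"
        hence "b < c * p ^ 0" by simp
        hence "alpha p N0 g c b ((N0 - 0) mod N0) = 0"
          using c gadm[of c b 0] assms(6) N0 by (auto split: if_splits)
        thus False using c by (simp add: H_def split: if_splits)
      qed
    qed
    have "Sum_any (\<lambda>c. if p dvd c then 0 else H c) = (\<Sum>c\<in>{..b}. if p dvd c then 0 else H c)"
      by (rule Sum_any.expand_superset[OF _ sub]) simp
    moreover have "(\<Sum>c\<in>{..b}. h (c, 0)) = (\<Sum>c\<in>{..b}. if p dvd c then 0 else H c)"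
      by (rule sum.cong) (auto simp: h_def)
    ultimately show ?thesis by simp
  qed
  finally show ?thesis unfolding H_def .
qed

end
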